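(* Let $N\ge0$ be an integer. For generic complex $a,b,c,d,q$, the unique coefficients $C_k^l$ ($0\le k,l\le N$) in the polynomial identity $$(ax;q^{-1})_k\,(bx;q^{-1})_{N-k}=\sum_{l=0}^N C_k^l\,(cx;q)_l\,(dx;q)_{N-l}$$ are $$C_k^l=q^{l(l-N)}\binom{N}{l}_q\frac{(q^{1-N}b/d;q)_l\,(q^{1-N}b/c;q)_{N-l}\,(q^{1-k}a/c;q)_k}{(q^{l-N}c/d;q)_l\,(q^{-l}d/c;q)_{N-l}\,(q^{1-N}b/c;q)_k}\;{}_4\phi_3\!\left[\begin{matrix}q^{-k},q^{-l},q^{k-N}b/a,q^{l-N}c/d\\ q^{-N},c/a,q^{1-N}b/d\end{matrix};q,q\right].$$
   Context: $(a;q)_k=\prod_{j=0}^{k-1}(1-aq^j)$ (for any base, so $(a;q^{-1})_k=\prod_{j=0}^{k-1}(1-aq^{-j})$), $\binom{N}{l}_q=\frac{(q;q)_N}{(q;q)_l(q;q)_{N-l}}$, and ${}_4\phi_3\!\left[\begin{matrix}a_1,\dots,a_4\\ b_1,b_2,b_3\end{matrix};q,z\right]=\sum_{k\ge0}\frac{(a_1,\dots,a_4;q)_k}{(q,b_1,b_2,b_3;q)_k}z^k$ (terminating). *)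

theory Defs
  imports Complex_Main
begin

definition qpoch :: "complex \<Rightarrow> complex \<Rightarrow> nat \<Rightarrow> complex" where
  "qpoch a q k = (\<Prod>j<k. 1 - a * q ^ j)"

definition qbinom :: "complex \<Rightarrow> nat \<Rightarrow> nat \<Rightarrow> complex" where
  "qbinom q n l = qpoch q q n / (qpoch q q l * qpoch q q (n - l))"

text \<open>Terminating 4phi3 series, summed over j = 0..n (the series terminates at n
  because one numerator parameter is q^(-n)).\<close>
definition phi43 :: "nat \<Rightarrow> complex \<Rightarrow> complex \<Rightarrow> complex \<Rightarrow> complex \<Rightarrow>
    complex \<Rightarrow> complex \<Rightarrow> complex \<Rightarrow> complex \<Rightarrow> complex \<Rightarrow> complex" where
  "phi43 n a1 a2 a3 a4 b1 b2 b3 q z =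
     (\<Sum>j\<le>n. (qpoch a1 q j * qpoch a2 q j * qpoch a3 q j * qpoch a4 q j) /
              (qpoch q q j * qpoch b1 q j * qpoch b2 q j * qpoch b3 q j) * z ^ j)"

end

theory Submission
  imports Defs
begin

lemma qpoch_0[simp]: "qpoch a q 0 = 1" by (simp add: qpoch_def)
lemma qpoch_Suc: "qpoch a q (Suc n) = qpoch a q n * (1 - a*q^n)"
  by (simp add: qpoch_def)
lemma qpoch_Suc_first: "qpoch a q (Suc n) = (1 - a) * qpoch (a*q) q n"
  unfolding qpoch_def by (subst prod.lessThan_Suc_shift) (simp add: mult.assoc)
lemma qpoch_add: "qpoch a q (m+n) = qpoch a q m * qpoch (a*q^m) q n"
  by (induction n) (auto simp: qpoch_Suc power_add mult_ac)
lemma qpoch_nz_le: "qpoch a q n \<noteq> 0 \<Longrightarrow> m \<le> n \<Longrightarrow> qpoch a q m \<noteq> 0"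
  by (metis le_add_diff_inverse mult_eq_0_iff qpoch_add)
lemma qpoch_nz_factor: "qpoch a q n \<noteq> 0 \<Longrightarrow> i < n \<Longrightarrow> 1 - a*q^i \<noteq> 0"
  unfolding qpoch_def by auto
lemma qpoch_eq0: "i < n \<Longrightarrow> a*q^i = 1 \<Longrightarrow> qpoch a q n = 0"
  unfolding qpoch_def by (rule prod_zero) auto

lemma qpoch_inv_rev:
  assumes "q \<noteq> 0"
  shows "qpoch z (inverse q) n = qpoch (z*q*inverse q^n) q n"
proof (induction n)
  case 0 then show ?case by simp
next
  case (Suc n)
  have a1: "z*q*inverse q^Suc n*q = z*q*inverse q^n" using assms by (simp add: field_simps)
  have a2: "z*q*inverse q^Suc n = z * inverse q ^ n" using assms by (simp add: field_simps)
  have "qpoch (z*q*inverse q^Suc n) q (Suc n) = (1 - z*q*inverse q^Suc n) * qpoch (z*q*inverse q^Suc n*q) q n"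
    by (rule qpoch_Suc_first)
  also have "\<dots> = (1 - z * inverse q ^ n) * qpoch (z*q*inverse q^n) q n" unfolding a1 by (simp only: a2)
  also have "\<dots> = qpoch z (inverse q) n * (1 - z*inverse q^n)" by (subst Suc.IH) (rule mult.commute)
  also have "\<dots> = qpoch z (inverse q) (Suc n)" by (simp add: qpoch_Suc)
  finally show ?case by simp
qed

lemma GL:
  fixes r s e f h x :: complex and K :: "nat \<Rightarrow> nat \<Rightarrow> complex"
  assumes K0: "K 0 0 = 1"
  and nd: "\<forall>m<n. \<forall>j\<le>m. h * r^(m-j) \<noteq> f * s^j"
  and rec: "\<forall>m<n. \<forall>j\<le>Suc m. K (Suc m) j =
      (if j \<le> m then K m j * (e*r^m - f*s^j) / (h*r^(m-j) - f*s^j) else 0)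
    + (if 0 < j then K m (j-1) * (h*r^(m-(j-1)) - e*r^m) / (h*r^(m-(j-1)) - f*s^(j-1)) else 0)"
  shows "qpoch (e*x) r n = (\<Sum>j\<le>n. K n j * qpoch (f*x) s j * qpoch (h*x) r (n-j))"
  using nd rec
proof (induction n)
  case 0 then show ?case using K0 by simp
next
  case (Suc m)
  define B where "B j = qpoch (f*x) s j * qpoch (h*x) r (Suc m - j)" for j
  define al where "al j = (e*r^m - f*s^j) / (h*r^(m-j) - f*s^j)" for j
  define be where "be j = (h*r^(m-j) - e*r^m) / (h*r^(m-j) - f*s^j)" for j
  have IH: "qpoch (e*x) r m = (\<Sum>j\<le>m. K m j * qpoch (f*x) s j * qpoch (h*x) r (m-j))"
    using Suc by auto
  have split: "qpoch (f*x) s j * qpoch (h*x) r (m-j) * (1 - e*x*r^m)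
      = al j * B j + be j * B (Suc j)" if "j \<le> m" for j
  proof -
    have ne: "h * r^(m-j) - f*s^j \<noteq> 0" using Suc.prems(1) that by auto
    have B1: "B j = qpoch (f*x) s j * qpoch (h*x) r (m-j) * (1 - h*x*r^(m-j))"
      unfolding B_def using that by (simp add: Suc_diff_le qpoch_Suc)
    have B2: "B (Suc j) = qpoch (f*x) s j * qpoch (h*x) r (m-j) * (1 - f*x*s^j)"
      unfolding B_def using that by (simp add: qpoch_Suc)
    have sc: "1 - e*x*r^m = (e*r^m - f*s^j) / (h*r^(m-j) - f*s^j) * (1 - h*x*r^(m-j))
        + (h*r^(m-j) - e*r^m) / (h*r^(m-j) - f*s^j) * (1 - f*x*s^j)"
    proof -
      have "(e*r^m - f*s^j) * (1 - h*x*r^(m-j)) + (h*r^(m-j) - e*r^m) * (1 - f*x*s^j) = (1 - e*x*r^m) * (h*r^(m-j) - f*s^j)"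
        by (simp add: algebra_simps)
      note eq = this
      have "(e*r^m - f*s^j) / (h*r^(m-j) - f*s^j) * (1 - h*x*r^(m-j))
        + (h*r^(m-j) - e*r^m) / (h*r^(m-j) - f*s^j) * (1 - f*x*s^j)
        = ((e*r^m - f*s^j) * (1 - h*x*r^(m-j)) + (h*r^(m-j) - e*r^m) * (1 - f*x*s^j)) / (h*r^(m-j) - f*s^j)"
        by (simp add: add_divide_distrib)
      also have "\<dots> = (1 - e*x*r^m) * (h*r^(m-j) - f*s^j) / (h*r^(m-j) - f*s^j)" by (simp only: eq)
      also have "\<dots> = 1 - e*x*r^m" using ne by simp
      finally show ?thesis by simp
    qed
    have aux: "\<And>C y a u b v::complex. y = a*u + b*v \<Longrightarrow> C*y = a*(C*u) + b*(C*v)"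
      by (simp add: algebra_simps)
    show ?thesis unfolding B1 B2 al_def be_def by (rule aux[OF sc])
  qed
  have "qpoch (e*x) r (Suc m) = (\<Sum>j\<le>m. K m j * (al j * B j + be j * B (Suc j)))"
    unfolding qpoch_Suc IH sum_distrib_right
    by (rule sum.cong) (auto simp: split[symmetric] mult.assoc)
  also have "\<dots> = (\<Sum>j\<le>m. K m j * al j * B j) + (\<Sum>j\<le>m. K m j * be j * B (Suc j))"
    by (simp add: sum.distrib algebra_simps)
  also have "(\<Sum>j\<le>m. K m j * al j * B j) = (\<Sum>j\<le>Suc m. (if j \<le> m then K m j * al j else 0) * B j)"
    by simp
  also have "(\<Sum>j\<le>m. K m j * be j * B (Suc j)) = (\<Sum>j\<le>Suc m. (if 0 < j then K m (j-1) * be (j-1) else 0) * B j)"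
    by (subst sum.atMost_Suc_shift) simp
  also have "(\<Sum>j\<le>Suc m. (if j \<le> m then K m j * al j else 0) * B j) + (\<Sum>j\<le>Suc m. (if 0 < j then K m (j-1) * be (j-1) else 0) * B j)
     = (\<Sum>j\<le>Suc m. K (Suc m) j * B j)"
    unfolding sum.distrib[symmetric]
  proof (rule sum.cong)
    fix j assume "j \<in> {..Suc m}"
    then have "K (Suc m) j = (if j \<le> m then K m j * al j else 0) + (if 0 < j then K m (j-1) * be (j-1) else 0)"
      using Suc.prems(2) unfolding al_def be_def
      by (auto simp: Suc_diff_le)
    then show "(if j \<le> m then K m j * al j else 0) * B j + (if 0 < j then K m (j-1) * be (j-1) else 0) * B j = K (Suc m) j * B j"
      by (simp add: algebra_simps)
  qed simp
  finally show ?case unfolding B_def by (simp add: mult.assoc)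
qed

lemma qpoch_Suc_first_eq: "a*q = b \<Longrightarrow> qpoch a q (Suc n) = (1-a) * qpoch b q n"
  using qpoch_Suc_first by metis

definition Mc :: "complex \<Rightarrow> complex \<Rightarrow> complex \<Rightarrow> complex \<Rightarrow> nat \<Rightarrow> nat \<Rightarrow> complex" where
"Mc q e f h n j = q^j * qpoch (q * inverse q^n * e / f) q n * qpoch (inverse q^n) q j * qpoch (h/e) q j
   / (qpoch (q * inverse q^n * h / f) q n * qpoch q q j * qpoch (f/e) q j)"

lemma M_alg:
  fixes q P I e f h :: complex
  assumes "q \<noteq> 0" "e \<noteq> 0" "f \<noteq> 0" "I \<noteq> 0"
    "1 - P*h/f \<noteq> 0" "1 - q*I \<noteq> 0" "1 - f*I/e \<noteq> 0"
  shows "q*(1-P*e/f)*(1-P/q)*(1-h*I/e)/((1-P*h/f)*(1-q*I)*(1-f*I/e))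
     = q*(1-P*I)*(1-h*I/e)/((1-q*I)*(1-f*I/e))*(e*P-f*q*I)/(h*P*q*I-f*q*I)+(h*P*I-e*P)/(h*P*I-f*I)"
proof -
  have a: "f - P*h \<noteq> 0" using assms(3,5) by (simp add: field_simps)
  have a': "h*P - f \<noteq> 0" using a by (simp add: algebra_simps)
  have b: "e - f*I \<noteq> 0" using assms(2,7) by (simp add: field_simps)
  have d: "1 - q*I \<noteq> 0" by fact
  have poly: "I*(f-P*e)*(q-P)*(e-h*I) = -(1-P*I)*(e-h*I)*(e*P-f*q*I) + P*(e-h*I)*(1-q*I)*(e-f*I)"
    by (simp add: algebra_simps)
  have L: "q*(1-P*e/f)*(1-P/q)*(1-h*I/e)/((1-P*h/f)*(1-q*I)*(1-f*I/e))
      = I*(f-P*e)*(q-P)*(e-h*I) / ((f-P*h)*(1-q*I)*(e-f*I)*I)"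
    using assms a b d by (simp add: divide_simps)
  have R: "q*(1-P*I)*(1-h*I/e)/((1-q*I)*(1-f*I/e))*(e*P-f*q*I)/(h*P*q*I-f*q*I)+(h*P*I-e*P)/(h*P*I-f*I)
      = (-(1-P*I)*(e-h*I)*(e*P-f*q*I) + P*(e-h*I)*(1-q*I)*(e-f*I)) / ((f-P*h)*(1-q*I)*(e-f*I)*I)"
  proof -
    have e1: "h*P*q*I-f*q*I = q*I*(h*P-f)" by (simp add: algebra_simps)
    have e2: "h*P*I-f*I = I*(h*P-f)" by (simp add: algebra_simps)
    have e3: "f - P*h = -(h*P-f)" by (simp add: algebra_simps)
    show ?thesis unfolding e1 e2 e3 using assms a' b d
      by (simp add: divide_simps; simp add: algebra_simps)
  qed
  show ?thesis unfolding L R poly ..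
qed

lemma M_alg2:
  fixes q P I e f h :: complex
  assumes "q \<noteq> 0" "e \<noteq> 0" "f \<noteq> 0" "I \<noteq> 0" "P*I = 1"
    "1 - P*h/f \<noteq> 0" "1 - q*I \<noteq> 0" "1 - f*I/e \<noteq> 0" "h - f*I \<noteq> 0"
  shows "q*(1-P*e/f)*(1-P/q)*(1-h*I/e)/((1-P*h/f)*(1-q*I)*(1-f*I/e)) = (h*1 - e*P)/(h*1 - f*I)"
proof -
  have P: "P = 1/I" using assms(4,5) by (simp add: field_simps)
  have a: "f*I - h \<noteq> 0" using assms(9) by (simp add: algebra_simps)
  have b: "e - f*I \<noteq> 0" using assms(2,8) by (simp add: field_simps)
  have c: "q*I - 1 \<noteq> 0" using assms(7) by (simp add: algebra_simps)
  show ?thesis unfolding P using assms(1-4,7,9) a b c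
    by (simp add: divide_simps; simp add: algebra_simps)
qed

lemma qpoch_ne_from:
  assumes "\<And>i. i < n \<Longrightarrow> 1 - a*q^i \<noteq> 0" shows "qpoch a q n \<noteq> 0"
  using assms unfolding qpoch_def by (auto simp: prod_zero_iff)

lemma Mc_rec:
  fixes q e f h :: complex
  assumes q: "q \<noteq> 0" and e: "e \<noteq> 0" and f: "f \<noteq> 0"
    and qq: "qpoch q q (Suc m) \<noteq> 0" and fe: "qpoch (f/e) q (Suc m) \<noteq> 0"
    and hf: "\<forall>i\<le>m. h \<noteq> f*q^i"
    and j: "j \<le> Suc m"
  shows "Mc q e f h (Suc m) j =
      (if j \<le> m then Mc q e f h m j * (e*inverse q^m - f*q^j) / (h*inverse q^(m-j) - f*q^j) else 0)
    + (if 0 < j then Mc q e f h m (j-1) * (h*inverse q^(m-(j-1)) - e*inverse q^m) / (h*inverse q^(m-(j-1)) - f*q^(j-1)) else 0)"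
proof -
  define P where "P = inverse q ^ m"
  have Pnz: "P \<noteq> 0" using q unfolding P_def by simp
  have Y: "qpoch (q * inverse q^m * h / f) q m \<noteq> 0"
  proof (rule qpoch_ne_from)
    fix t assume t: "t < m"
    show "1 - q * inverse q^m * h / f * q^t \<noteq> 0"
    proof
      assume "1 - q * inverse q^m * h / f * q^t = 0"
      then have "h * q^(Suc t) = f * q^m" using q f by (simp add: field_simps)
      moreover have "q^m = q^(m - Suc t) * q^(Suc t)" using t by (metis Suc_leI le_add_diff_inverse2 power_add)
      ultimately have "h = f * q^(m - Suc t)" using q by simp
      then show False using hf by auto
    qed
  qed
  have Ph: "1 - P*h/f \<noteq> 0"
  proof
    assume "1 - P*h/f = 0" then have "h = f*q^m" using q f unfolding P_def by (simp add: field_simps)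
    then show False using hf by auto
  qed
  have Y1: "qpoch (q * inverse q^Suc m * h / f) q (Suc m) = (1 - P*h/f) * qpoch (q * inverse q^m * h / f) q m"
  proof -
    have "q * inverse q^Suc m * h / f * q = q * inverse q^m * h / f" using q by (simp add: field_simps)
    from qpoch_Suc_first_eq[OF this] show ?thesis unfolding P_def using q by (simp add: field_simps)
  qed
  have X1: "qpoch (q * inverse q^Suc m * e / f) q (Suc m) = (1 - P*e/f) * qpoch (q * inverse q^m * e / f) q m"
  proof -
    have "q * inverse q^Suc m * e / f * q = q * inverse q^m * e / f" using q by (simp add: field_simps)
    from qpoch_Suc_first_eq[OF this] show ?thesis unfolding P_def using q by (simp add: field_simps)
  qed
  show ?thesis
  proof (cases j)
    case 0
    have "Mc q e f h (Suc m) 0 = qpoch (q * inverse q^m * e / f) q m / qpoch (q * inverse q^m * h / f) q m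
            * ((1 - P*e/f) / (1 - P*h/f))"
      unfolding Mc_def X1 Y1 using Y Ph by (simp add: mult_ac)
    also have "(1 - P*e/f) / (1 - P*h/f) = (e*P - f)/(h*P - f)"
      using f Ph by (simp add: divide_simps; simp add: algebra_simps)
    finally show ?thesis using 0 unfolding Mc_def P_def by simp
  next
    case (Suc i)
    define I where "I = q^i"
    have Inz: "I \<noteq> 0" using q unfolding I_def by simp
    define X where "X = qpoch (q * inverse q^m * e / f) q m"
    define Yv where "Yv = qpoch (q * inverse q^m * h / f) q m"
    define u where "u = qpoch (inverse q^m) q i"
    define v where "v = qpoch (h/e) q i"
    define w where "w = qpoch q q i"
    define z where "z = qpoch (f/e) q i"
    have iq: "i \<le> m" using j Suc by simp
    have wnz: "w \<noteq> 0" unfolding w_def using qpoch_nz_le[OF qq] iq by simp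
    have znz: "z \<noteq> 0" unfolding z_def using qpoch_nz_le[OF fe] iq by simp
    have w1: "1 - q*I \<noteq> 0" using qpoch_nz_factor[OF qq, of i] iq unfolding I_def by (simp add: mult.commute)
    have z1: "1 - f*I/e \<noteq> 0" using qpoch_nz_factor[OF fe, of i] iq unfolding I_def by (simp add: mult.commute)
    define C where "C = I * X * u * v / (Yv * w * z)"
    have u1: "qpoch (inverse q^Suc m) q (Suc i) = (1 - P/q) * u"
    proof -
      have "inverse q^Suc m * q = inverse q^m" using q by (simp add: field_simps)
      from qpoch_Suc_first_eq[OF this] show ?thesis unfolding P_def u_def using q by (simp add: field_simps)
    qed
    have M1': "Mc q e f h (Suc m) (Suc i) = q*I*((1-P*e/f)*X)*((1-P/q)*u)*(v*(1-h/e*I)) / (((1-P*h/f)*Yv)*(w*(1-q*I))*(z*(1-f/e*I)))"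
      unfolding Mc_def X1 Y1 u1 unfolding qpoch_Suc power_Suc
      unfolding X_def[symmetric] Yv_def[symmetric] u_def[symmetric] v_def[symmetric] w_def[symmetric] z_def[symmetric] I_def[symmetric]
      by (rule refl)
    have M2': "Mc q e f h m (Suc i) = q*I*X*(u*(1-P*I))*(v*(1-h/e*I)) / (Yv*(w*(1-q*I))*(z*(1-f/e*I)))"
      unfolding Mc_def unfolding qpoch_Suc power_Suc
      unfolding X_def[symmetric] Yv_def[symmetric] u_def[symmetric] v_def[symmetric] w_def[symmetric] z_def[symmetric] I_def[symmetric]
      unfolding P_def[symmetric]
      by (rule refl)
    have Ynz: "Yv \<noteq> 0" using Y unfolding Yv_def .
    have gen1: "\<And>X u v. q*I*((1-P*e/f)*X)*((1-P/q)*u)*(v*(1-h/e*I)) / (((1-P*h/f)*Yv)*(w*(1-q*I))*(z*(1-f/e*I)))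
       = (I*X*u*v/(Yv*w*z)) * (q*(1-P*e/f)*(1-P/q)*(1-h*I/e)/((1-P*h/f)*(1-q*I)*(1-f*I/e)))"
      using q e f Inz Ynz wnz znz w1 z1 Ph by (simp add: divide_simps; simp add: algebra_simps)
    have gen2: "\<And>X u v. q*I*X*(u*(1-P*I))*(v*(1-h/e*I)) / (Yv*(w*(1-q*I))*(z*(1-f/e*I)))
       = (I*X*u*v/(Yv*w*z)) * (q*(1-P*I)*(1-h*I/e)/((1-q*I)*(1-f*I/e)))"
      using q e f Inz Ynz wnz znz w1 z1 Ph by (simp add: divide_simps; simp add: algebra_simps)
    have M1: "Mc q e f h (Suc m) (Suc i) = C * (q*(1-P*e/f)*(1-P/q)*(1-h*I/e)/((1-P*h/f)*(1-q*I)*(1-f*I/e)))"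
      unfolding M1' gen1 C_def ..
    have M2: "Mc q e f h m (Suc i) = C * (q*(1-P*I)*(1-h*I/e)/((1-q*I)*(1-f*I/e)))"
      unfolding M2' gen2 C_def ..
    have M3: "Mc q e f h m i = C"
      unfolding Mc_def C_def X_def Yv_def u_def v_def w_def z_def I_def by simp
    show ?thesis
    proof (cases "i = m")
      case True
      have PI: "P*I = 1" unfolding P_def I_def True using q by (simp add: power_mult_distrib[symmetric])
      have hI: "h - f*I \<noteq> 0" using hf True unfolding I_def by auto
      have "Mc q e f h (Suc m) (Suc i) = C * ((h*1 - e*P)/(h*1 - f*I))"
        unfolding M1 using M_alg2[OF q e f Inz PI Ph w1 z1 hI] by simp
      then show ?thesis using Suc True unfolding M3[symmetric] P_def I_def by simp
    next
      case False
      then have im: "Suc i \<le> m" using iq by simp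
      have pw1: "inverse q^(m - Suc i) = P*q*I" unfolding P_def I_def using q im
        by (simp add: power_diff field_simps)
      have pw2: "inverse q^(m - i) = P*I" unfolding P_def I_def using q iq
        by (simp add: power_diff field_simps)
      have "Mc q e f h (Suc m) (Suc i) = C * (q*(1-P*I)*(1-h*I/e)/((1-q*I)*(1-f*I/e))*(e*P-f*q*I)/(h*P*q*I-f*q*I)+(h*P*I-e*P)/(h*P*I-f*I))"
        unfolding M1 using M_alg[OF q e f Inz Ph w1 z1] by simp
      also have "\<dots> = Mc q e f h m (Suc i) * (e*P-f*q*I)/(h*P*q*I-f*q*I) + Mc q e f h m i * (h*P*I-e*P)/(h*P*I-f*I)"
        unfolding M2 M3 by (simp add: distrib_left mult.assoc)
      also have "\<dots> = (if Suc i \<le> m then Mc q e f h m (Suc i) * (e*inverse q^m - f*q^Suc i) / (h*inverse q^(m-Suc i) - f*q^Suc i) else 0)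
    + (if 0 < Suc i then Mc q e f h m (Suc i-1) * (h*inverse q^(m-(Suc i-1)) - e*inverse q^m) / (h*inverse q^(m-(Suc i-1)) - f*q^(Suc i-1)) else 0)"
        using im unfolding pw1 pw2 diff_Suc_1 P_def[symmetric] power_Suc I_def[symmetric] by (simp add: mult.assoc)
      finally show ?thesis using Suc by simp
    qed
  qed
qed

definition Ec :: "complex \<Rightarrow> complex \<Rightarrow> complex \<Rightarrow> complex \<Rightarrow> nat \<Rightarrow> nat \<Rightarrow> complex" where
"Ec q e f g n l = q^(l*l) * inverse q^(l*n) * (qpoch q q n / (qpoch q q l * qpoch q q (n-l)))
   * qpoch (e/g) q l * qpoch (e/f) q (n-l)
   / (qpoch (q^l * inverse q^n * f / g) q l * qpoch (inverse q^l * g / f) q (n-l))"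

lemma E_alg:
  fixes q I Kq e f g :: complex
  assumes nz: "q \<noteq> 0" "I \<noteq> 0" "Kq \<noteq> 0" "f \<noteq> 0" "g \<noteq> 0"
    and d1: "1 - q*I \<noteq> 0" and d2: "1 - q*Kq \<noteq> 0"
    and d3: "q*Kq*g - f*I \<noteq> 0" and d4: "Kq*g - f*I \<noteq> 0" and d5: "q*I*f - g*Kq \<noteq> 0"
  shows "I*(1/(q*I*Kq))*(1-q*(q*I*Kq))/((1-q*I)*(1-q*Kq))*(1-e*I/g)*(1-e*Kq/f)/((1-f/(q*Kq*g)*I)*(1-g/(q*I*f)*Kq))
    = q*I*I*(1/(q*I*Kq))*(1-e*I/g)*(1-f/(q*Kq*g))/((1-q*I)*(1-f/(q*Kq*g)*I)*(1-f/(q*Kq*g)*q*I))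
        * (e*(q*I*Kq) - f*q*I)/(g*Kq - f*q*I)
      + (1-e*Kq/f)*(1-g/(q*I*f))/((1-q*Kq)*(1-g/(q*I*f)*Kq)*(1-g/(q*I*f)*q*Kq))
        * (g*q*Kq - e*(q*I*Kq))/(g*q*Kq - f*I)"
proof -
  have a1: "1-f/(q*Kq*g)*I = (q*Kq*g - f*I)/(q*Kq*g)" using nz by (simp add: field_simps)
  have a2: "1-f/(q*Kq*g)*q*I = q*(Kq*g - f*I)/(q*Kq*g)" using nz by (simp add: field_simps)
  have a3: "1-g/(q*I*f)*Kq = (q*I*f - g*Kq)/(q*I*f)" using nz by (simp add: field_simps)
  have a4: "1-g/(q*I*f)*q*Kq = q*(I*f - g*Kq)/(q*I*f)" using nz by (simp add: field_simps)
  have a5: "g*Kq - f*q*I = -(q*I*f - g*Kq)" by (simp add: algebra_simps)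
  have a6: "g*q*Kq - f*I = q*Kq*g - f*I" by (simp add: algebra_simps)
  have d6: "I*f - g*Kq \<noteq> 0" using d4 by (auto simp: algebra_simps)
  show ?thesis unfolding a1 a2 a3 a4 a5 a6 using nz d1 d2 d3 d5 d6
    by (simp add: divide_simps; simp add: algebra_simps)
qed

lemma cancel_pow:
  fixes f g q :: complex
  assumes "q \<noteq> 0" "f*q^(x+c) = g*q^(y+c)" shows "f*q^x = g*q^y"
  using assms by (simp add: power_add)

lemma Ec_zero:
  assumes "qpoch q q n \<noteq> 0"
  shows "Ec q e f g n 0 = qpoch (e/f) q n / qpoch (g/f) q n"
  using assms unfolding Ec_def by simp

lemma Ec_diag:
  assumes "q \<noteq> 0" "qpoch q q n \<noteq> 0"
  shows "Ec q e f g n n = qpoch (e/g) q n / qpoch (f/g) q n"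
proof -
  have a: "q^(n*n) * inverse q^(n*n) = 1" using assms(1) by (simp add: power_inverse field_simps)
  have b: "q^n * inverse q^n * f / g = f/g" using assms(1) by (simp add: field_simps)
  show ?thesis using assms unfolding Ec_def a b by simp
qed

lemma E_alg':
  fixes q I Kq e f g z0 w pm M :: complex
  assumes nz: "q \<noteq> 0" "I \<noteq> 0" "Kq \<noteq> 0" "f \<noteq> 0" "g \<noteq> 0"
    and d1: "1 - q*I \<noteq> 0" and d2: "1 - q*Kq \<noteq> 0"
    and d3: "q*Kq*g - f*I \<noteq> 0" and d4: "Kq*g - f*I \<noteq> 0" and d5: "q*I*f - g*Kq \<noteq> 0"
    and z0: "z0 = f/(q*Kq*g)" and w: "w = g/(q*I*f)" and pm: "pm = 1/(q*I*Kq)" and M: "M = q*I*Kq"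
  shows "I*pm*(1-q*M)/((1-q*I)*(1-q*Kq))*(1-e/g*I)*(1-e/f*Kq)/((1-z0*I)*(1-w*Kq))
     = q*I*I*pm*(1-e/g*I)*(1-z0)/((1-q*I)*(1-z0*I)*(1-z0*(q*I))) * (e*M - f*(q*I))/(g*Kq - f*(q*I))
     + (1-e/f*Kq)*(1-w)/((1-q*Kq)*(1-w*Kq)*(1-w*(q*Kq))) * (g*(q*Kq) - e*M)/(g*(q*Kq) - f*I)"
proof -
  have "I*(1/(q*I*Kq))*(1-q*(q*I*Kq))/((1-q*I)*(1-q*Kq))*(1-e*I/g)*(1-e*Kq/f)/((1-f/(q*Kq*g)*I)*(1-g/(q*I*f)*Kq))
    = q*I*I*(1/(q*I*Kq))*(1-e*I/g)*(1-f/(q*Kq*g))/((1-q*I)*(1-f/(q*Kq*g)*I)*(1-f/(q*Kq*g)*q*I))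
        * (e*(q*I*Kq) - f*q*I)/(g*Kq - f*q*I)
      + (1-e*Kq/f)*(1-g/(q*I*f))/((1-q*Kq)*(1-g/(q*I*f)*Kq)*(1-g/(q*I*f)*q*Kq))
        * (g*q*Kq - e*(q*I*Kq))/(g*q*Kq - f*I)"
    by (rule E_alg[OF nz d1 d2 d3 d4 d5])
  then show ?thesis unfolding z0 w pm M by (simp add: mult_ac)
qed

lemma Ec_rec:
  fixes q e f g :: complex
  assumes q: "q \<noteq> 0" and f: "f \<noteq> 0" and g: "g \<noteq> 0"
    and qq: "qpoch q q (Suc m) \<noteq> 0"
    and ND: "\<forall>s t. s + t < Suc m \<longrightarrow> f*q^s \<noteq> g*q^t"
    and j: "j \<le> Suc m"
  shows "Ec q e f g (Suc m) j =
      (if j \<le> m then Ec q e f g m j * (e*q^m - f*q^j) / (g*q^(m-j) - f*q^j) else 0)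
    + (if 0 < j then Ec q e f g m (j-1) * (g*q^(m-(j-1)) - e*q^m) / (g*q^(m-(j-1)) - f*q^(j-1)) else 0)"
proof -
  have ndf: "f*q^s \<noteq> g*q^t" if "s + t < Suc m" for s t using ND that by blast
  have qm: "qpoch q q m \<noteq> 0" using qpoch_nz_le[OF qq] by simp
  show ?thesis
  proof (cases j)
    case 0
    have a: "qpoch (g/f) q m \<noteq> 0"
    proof (rule qpoch_ne_from)
      fix t assume t: "t < m"
      show "1 - g/f*q^t \<noteq> 0"
      proof
        assume "1 - g/f*q^t = 0" then have "f*q^0 = g*q^t" using f by (simp add: field_simps)
        then show False using ndf[of 0 t] t by simp
      qed
    qed
    have b: "1 - g/f*q^m \<noteq> 0"
    proof
      assume "1 - g/f*q^m = 0" then have "f*q^0 = g*q^m" using f by (simp add: field_simps)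
      then show False using ndf[of 0 m] by simp
    qed
    have gen: "\<And>X. X*(1-e/f*q^m) / (qpoch (g/f) q m*(1-g/f*q^m)) = X / qpoch (g/f) q m * (e*q^m - f*q^0) / (g*q^(m-0) - f*q^0)"
      using a b f by (simp add: divide_simps; simp add: algebra_simps)
    show ?thesis unfolding 0 Ec_zero[OF qq] Ec_zero[OF qm] qpoch_Suc gen by simp
  next
    case (Suc i)
    show ?thesis
    proof (cases "i = m")
      case True
      have qm': "qpoch q q (Suc i) \<noteq> 0" using qq True by simp
      have qi: "qpoch q q i \<noteq> 0" using qm True by simp
      have a: "qpoch (f/g) q m \<noteq> 0"
      proof (rule qpoch_ne_from)
        fix t assume t: "t < m"
        show "1 - f/g*q^t \<noteq> 0"
        proof
          assume "1 - f/g*q^t = 0" then have "f*q^t = g*q^0" using g by (simp add: field_simps)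
          then show False using ndf[of t 0] t by simp
        qed
      qed
      have b: "1 - f/g*q^m \<noteq> 0"
      proof
        assume "1 - f/g*q^m = 0" then have "f*q^m = g*q^0" using g by (simp add: field_simps)
        then show False using ndf[of m 0] by simp
      qed
      have gen: "\<And>X. X*(1-e/g*q^m) / (qpoch (f/g) q m*(1-f/g*q^m)) = X / qpoch (f/g) q m * (g*q^(m-m) - e*q^m) / (g*q^(m-m) - f*q^m)"
        using a b g by (simp add: divide_simps; simp add: algebra_simps)
      show ?thesis unfolding Suc True Ec_diag[OF q qq] unfolding qpoch_Suc gen by (simp add: Ec_diag[OF q qm])
    next
      case False
      then have im: "i < m" using j Suc by simp
      then obtain k where mk: "m = Suc i + k" by (metis less_imp_Suc_add add_Suc)
      define I where "I = q^i"
      define Kq where "Kq = q^k"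
      define S where "S = q^(i*i) * inverse q^(i*m)"
      define A where "A = qpoch (e/g) q i"
      define B where "B = qpoch (e/f) q k"
      define z0 where "z0 = f/(q*Kq*g)"
      define w where "w = g/(q*I*f)"
      define Z where "Z = qpoch z0 q i"
      define D where "D = qpoch w q k"
      define Qm where "Qm = qpoch q q m"
      define Qi where "Qi = qpoch q q i"
      define Qk where "Qk = qpoch q q k"
      define pm where "pm = 1/(q*I*Kq)"
      define M where "M = q*I*Kq"
      have Inz: "I \<noteq> 0" and Knz: "Kq \<noteq> 0" using q unfolding I_def Kq_def by auto
      have qmM: "q^m = M" unfolding M_def I_def Kq_def mk by (simp add: power_add)
      have pmM: "inverse q^m = pm" unfolding pm_def using qmM[unfolded M_def] by (simp add: power_inverse divide_inverse)
      have d1: "1 - q*I \<noteq> 0" using qpoch_nz_factor[OF qq, of i] im unfolding I_def by (simp add: mult.commute)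
      have d2: "1 - q*Kq \<noteq> 0" using qpoch_nz_factor[OF qq, of k] mk unfolding Kq_def by (simp add: mult.commute)
      have Qinz: "Qi \<noteq> 0" unfolding Qi_def using qpoch_nz_le[OF qq, of i] im by simp
      have Qknz: "Qk \<noteq> 0" unfolding Qk_def using qpoch_nz_le[OF qq, of k] mk by simp
      have n1: "f*q^i \<noteq> g*q^(Suc k)" using ndf[of i "Suc k"] mk by simp
      have n2: "f*q^i \<noteq> g*q^k" using ndf[of i k] mk by simp
      have n3: "f*q^(Suc i) \<noteq> g*q^k" using ndf[of "Suc i" k] mk by simp
      have n4: "f*q^0 \<noteq> g*q^(Suc k)" using ndf[of 0 "Suc k"] mk by simp
      have n5: "f*q^(Suc i) \<noteq> g*q^0" using ndf[of "Suc i" 0] mk by simp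
      have d3: "q*Kq*g - f*I \<noteq> 0" using n1 unfolding I_def Kq_def by (auto simp: algebra_simps)
      have d4: "Kq*g - f*I \<noteq> 0" using n2 unfolding I_def Kq_def by (auto simp: algebra_simps)
      have d5: "q*I*f - g*Kq \<noteq> 0" using n3 unfolding I_def Kq_def by (auto simp: algebra_simps)
      have c1: "1 - z0*I \<noteq> 0" using d3 q Knz g unfolding z0_def by (auto simp: field_simps)
      have c2: "1 - z0*(q*I) \<noteq> 0" using d4 q Knz g unfolding z0_def by (auto simp: field_simps)
      have c3: "1 - z0 \<noteq> 0" using n4 q Knz g f unfolding z0_def Kq_def by (auto simp: field_simps)
      have c4: "1 - w*Kq \<noteq> 0" using d5 q Inz f unfolding w_def by (auto simp: field_simps)
      have c5: "1 - w*(q*Kq) \<noteq> 0" using d4 q Inz f unfolding w_def by (auto simp: field_simps)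
      have c6: "1 - w \<noteq> 0" using n5 q Inz f g unfolding w_def I_def by (auto simp: field_simps)
      have Znz: "Z \<noteq> 0" unfolding Z_def
      proof (rule qpoch_ne_from)
        fix t assume t: "t < i"
        show "1 - z0*q^t \<noteq> 0"
        proof
          assume "1 - z0*q^t = 0"
          then have "f*q^t = g*q^(Suc k)" using q g Knz unfolding z0_def Kq_def by (simp add: field_simps)
          then show False using ndf[of t "Suc k"] t mk by simp
        qed
      qed
      have Dnz: "D \<noteq> 0" unfolding D_def
      proof (rule qpoch_ne_from)
        fix t assume t: "t < k"
        show "1 - w*q^t \<noteq> 0"
        proof
          assume "1 - w*q^t = 0"
          then have "f*q^(Suc i) = g*q^t" using q f Inz unfolding w_def I_def by (simp add: field_simps)
          then show False using ndf[of "Suc i" t] t mk by simp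
        qed
      qed
      have z0a: "q^i*inverse q^m*f/g = z0" unfolding z0_def Kq_def mk using q
        by (simp add: power_add field_simps)
      have z0b: "q^Suc i*inverse q^m*f/g = z0*q" unfolding z0_def Kq_def mk using q
        by (simp add: power_add field_simps)
      have z0c: "q^Suc i*inverse q^Suc m*f/g = z0" unfolding z0_def Kq_def mk using q
        by (simp add: power_add field_simps)
      have wa: "inverse q^Suc i*g/f = w" unfolding w_def I_def using q by (simp add: field_simps)
      have wb: "inverse q^i*g/f = w*q" unfolding w_def I_def using q by (simp add: field_simps)
      have f1: "q^(Suc i*Suc i)*inverse q^(Suc i*m) = S*(q*I*I*pm)"
      proof -
        have X1: "q^(Suc i*Suc i) = q^(i*i) * (q*I*I)" unfolding I_def
          by (simp add: power_add[symmetric] algebra_simps)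
        have X2: "inverse q^(Suc i*m) = inverse q^(i*m) * pm"
        proof -
          have "Suc i*m = i*m + m" by simp
          then show ?thesis using pmM by (simp only: power_add)
        qed
        show ?thesis unfolding S_def X1 X2 by (simp only: mult_ac)
      qed
      have f1': "q^(Suc i*Suc i)*inverse q^(Suc i*Suc m) = S*(I*pm)"
      proof -
        have X1: "q^(Suc i*Suc i) = q^(i*i) * (q*I*I)" unfolding I_def
          by (simp add: power_add[symmetric] algebra_simps)
        have X2: "inverse q^(Suc i*Suc m) = inverse q^(i*m) * pm * inverse q^(Suc i)"
        proof -
          have "Suc i*Suc m = i*m + m + Suc i" by simp
          then show ?thesis using pmM by (simp only: power_add)
        qed
        have X3: "inverse q^(Suc i) = 1/(q*I)" unfolding I_def using q by (simp add: field_simps)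
        show ?thesis unfolding S_def X1 X2 X3 using q Inz by (simp add: field_simps)
      qed
      have f1'': "q^(i*i)*inverse q^(i*m) = S" unfolding S_def ..
      have f5: "qpoch (q^Suc i*inverse q^m*f/g) q (Suc i) = Z*(1-z0*I)*(1-z0*(q*I))/(1-z0)"
      proof -
        have "(1 - z0) * qpoch (z0*q) q (Suc i) = qpoch z0 q (Suc (Suc i))" by (rule qpoch_Suc_first[symmetric])
        also have "\<dots> = Z*(1-z0*I)*(1-z0*(q*I))" unfolding qpoch_Suc Z_def I_def by simp
        finally show ?thesis unfolding z0b using c3 by (simp add: field_simps)
      qed
      have f10: "qpoch (inverse q^i*g/f) q (Suc k) = D*(1-w*Kq)*(1-w*(q*Kq))/(1-w)"
      proof -
        have "(1 - w) * qpoch (w*q) q (Suc k) = qpoch w q (Suc (Suc k))" by (rule qpoch_Suc_first[symmetric])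
        also have "\<dots> = D*(1-w*Kq)*(1-w*(q*Kq))" unfolding qpoch_Suc D_def Kq_def by simp
        finally show ?thesis unfolding wb using c6 by (simp add: field_simps)
      qed
      have mi: "m - Suc i = k" "Suc m - Suc i = Suc k" "m - i = Suc k" using mk by auto
      have EA: "Ec q e f g m (Suc i) = S*(q*I*I*pm) * (Qm/((Qi*(1-q*I))*Qk)) * (A*(1-e/g*I)) * B / ((Z*(1-z0*I)*(1-z0*(q*I))/(1-z0)) * D)"
        unfolding Ec_def f1 mi f5 wa unfolding qpoch_Suc
        unfolding Qm_def[symmetric] Qi_def[symmetric] Qk_def[symmetric] A_def[symmetric] B_def[symmetric] D_def[symmetric] I_def[symmetric]
        by (simp only: mult.assoc)
      have EB: "Ec q e f g (Suc m) (Suc i) = S*(I*pm) * (Qm*(1-q*M)/((Qi*(1-q*I))*(Qk*(1-q*Kq)))) * (A*(1-e/g*I)) * (B*(1-e/f*Kq)) / ((Z*(1-z0*I)) * (D*(1-w*Kq)))"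
        unfolding Ec_def f1' mi z0c wa unfolding qpoch_Suc qmM
        unfolding Qm_def[symmetric] Qi_def[symmetric] Qk_def[symmetric] A_def[symmetric] B_def[symmetric] D_def[symmetric] Z_def[symmetric] I_def[symmetric] Kq_def[symmetric]
        by (simp only: mult.assoc)
      have EC: "Ec q e f g m i = S * (Qm/(Qi*(Qk*(1-q*Kq)))) * A * (B*(1-e/f*Kq)) / (Z * (D*(1-w*Kq)*(1-w*(q*Kq))/(1-w)))"
        unfolding Ec_def f1'' mi z0a f10 unfolding qpoch_Suc
        unfolding Qm_def[symmetric] Qi_def[symmetric] Qk_def[symmetric] A_def[symmetric] B_def[symmetric] Z_def[symmetric] Kq_def[symmetric]
        by (simp only: mult.assoc)
      define Cm where "Cm = S*A*B*Qm/(Qi*Qk*Z*D)"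
      define E1 where "E1 = q*I*I*pm*(1-e/g*I)*(1-z0)/((1-q*I)*(1-z0*I)*(1-z0*(q*I)))"
      define E2 where "E2 = I*pm*(1-q*M)/((1-q*I)*(1-q*Kq))*(1-e/g*I)*(1-e/f*Kq)/((1-z0*I)*(1-w*Kq))"
      define E0 where "E0 = (1-e/f*Kq)*(1-w)/((1-q*Kq)*(1-w*Kq)*(1-w*(q*Kq)))"
      have gA: "Ec q e f g m (Suc i) = Cm * E1" unfolding EA Cm_def E1_def
        using Znz Dnz Qinz Qknz d1 c1 c2 c3 by (simp add: divide_simps; simp add: algebra_simps)
      have gB: "Ec q e f g (Suc m) (Suc i) = Cm * E2" unfolding EB Cm_def E2_def
        using Znz Dnz Qinz Qknz d1 d2 c1 c4 by (simp add: divide_simps; simp add: algebra_simps)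
      have gC: "Ec q e f g m i = Cm * E0" unfolding EC Cm_def E0_def
        using Znz Dnz Qinz Qknz d2 c4 c5 c6 by (simp add: divide_simps; simp add: algebra_simps)
      have alg: "E2 = E1 * (e*M - f*(q*I))/(g*Kq - f*(q*I)) + E0 * (g*(q*Kq) - e*M)/(g*(q*Kq) - f*I)"
        unfolding E1_def E2_def E0_def
        by (rule E_alg'[OF q Inz Knz f g d1 d2 d3 d4 d5 z0_def w_def pm_def M_def])
      have "Ec q e f g (Suc m) (Suc i) = Ec q e f g m (Suc i) * (e*M - f*(q*I))/(g*Kq - f*(q*I)) + Ec q e f g m i * (g*(q*Kq) - e*M)/(g*(q*Kq) - f*I)"
        unfolding gA gB gC alg by (simp add: distrib_left mult.assoc)
      then show ?thesis using Suc im unfolding qmM by (simp add: I_def Kq_def mi)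
    qed
  qed
qed

lemma expE:
  fixes q e f g x :: complex
  assumes q: "q \<noteq> 0" and f: "f \<noteq> 0" and g: "g \<noteq> 0" and qq: "qpoch q q n \<noteq> 0"
    and ND: "\<forall>s t. s + t < n \<longrightarrow> f*q^s \<noteq> g*q^t"
  shows "qpoch (e*x) q n = (\<Sum>l\<le>n. Ec q e f g n l * qpoch (f*x) q l * qpoch (g*x) q (n-l))"
proof (rule GL)
  show "Ec q e f g 0 0 = 1" unfolding Ec_def by simp
  show "\<forall>m<n. \<forall>j\<le>m. g * q^(m-j) \<noteq> f * q^j"
  proof (intro allI impI)
    fix m j assume "m < n" "j \<le> m"
    then show "g * q^(m-j) \<noteq> f * q^j" using ND[rule_format, of j "m-j"] by auto
  qed
  show "\<forall>m<n. \<forall>j\<le>Suc m. Ec q e f g (Suc m) j =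
      (if j \<le> m then Ec q e f g m j * (e*q^m - f*q^j) / (g*q^(m-j) - f*q^j) else 0)
    + (if 0 < j then Ec q e f g m (j-1) * (g*q^(m-(j-1)) - e*q^m) / (g*q^(m-(j-1)) - f*q^(j-1)) else 0)"
  proof (intro allI impI)
    fix m j assume m: "m < n" and j: "j \<le> Suc m"
    have qq': "qpoch q q (Suc m) \<noteq> 0" using qpoch_nz_le[OF qq] m by simp
    have ND': "\<forall>s t. s + t < Suc m \<longrightarrow> f*q^s \<noteq> g*q^t" using ND m by auto
    show "Ec q e f g (Suc m) j =
      (if j \<le> m then Ec q e f g m j * (e*q^m - f*q^j) / (g*q^(m-j) - f*q^j) else 0)
    + (if 0 < j then Ec q e f g m (j-1) * (g*q^(m-(j-1)) - e*q^m) / (g*q^(m-(j-1)) - f*q^(j-1)) else 0)"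
      by (rule Ec_rec[OF q f g qq' ND' j])
  qed
qed

lemma expM:
  fixes q e f h x :: complex
  assumes q: "q \<noteq> 0" and e: "e \<noteq> 0" and f: "f \<noteq> 0" and qq: "qpoch q q n \<noteq> 0"
    and fe: "qpoch (f/e) q n \<noteq> 0"
    and hf: "\<forall>i<n. h \<noteq> f*q^i"
  shows "qpoch (e*x) (inverse q) n = (\<Sum>j\<le>n. Mc q e f h n j * qpoch (f*x) q j * qpoch (h*x) (inverse q) (n-j))"
proof (rule GL)
  show "Mc q e f h 0 0 = 1" unfolding Mc_def by simp
  show "\<forall>m<n. \<forall>j\<le>m. h * inverse q^(m-j) \<noteq> f * q^j"
  proof (intro allI impI notI)
    fix m j assume m: "m < n" "j \<le> m" and eq: "h * inverse q^(m-j) = f * q^j"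
    have "q^m = q^(m-j) * q^j" using m by (simp flip: power_add)
    then have "h = f * q^m" using eq q by (simp add: field_simps power_inverse)
    then show False using hf m by auto
  qed
  show "\<forall>m<n. \<forall>j\<le>Suc m. Mc q e f h (Suc m) j =
      (if j \<le> m then Mc q e f h m j * (e*inverse q^m - f*q^j) / (h*inverse q^(m-j) - f*q^j) else 0)
    + (if 0 < j then Mc q e f h m (j-1) * (h*inverse q^(m-(j-1)) - e*inverse q^m) / (h*inverse q^(m-(j-1)) - f*q^(j-1)) else 0)"
  proof (intro allI impI)
    fix m j assume m: "m < n" and j: "j \<le> Suc m"
    have qq': "qpoch q q (Suc m) \<noteq> 0" using qpoch_nz_le[OF qq] m by simp
    have fe': "qpoch (f/e) q (Suc m) \<noteq> 0" using qpoch_nz_le[OF fe] m by simp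
    have hf': "\<forall>i\<le>m. h \<noteq> f*q^i" using hf m by auto
    show "Mc q e f h (Suc m) j =
      (if j \<le> m then Mc q e f h m j * (e*inverse q^m - f*q^j) / (h*inverse q^(m-j) - f*q^j) else 0)
    + (if 0 < j then Mc q e f h m (j-1) * (h*inverse q^(m-(j-1)) - e*inverse q^m) / (h*inverse q^(m-(j-1)) - f*q^(j-1)) else 0)"
      by (rule Mc_rec[OF q e f qq' fe' hf' j])
  qed
qed

lemma pw_diff: "q \<noteq> 0 \<Longrightarrow> (q::complex) powi (int a - int b) = q^a * inverse q^b"
  by (simp add: power_int_diff power_inverse divide_inverse)
lemma pw_1: "q \<noteq> 0 \<Longrightarrow> (q::complex) powi (1 - int n) = q * inverse q^n"
  using pw_diff[of q 1 n] by simp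
lemma pw_neg: "(q::complex) powi (- int n) = inverse q^n"
  by (simp add: power_int_minus power_inverse)
lemma pw_sq: "q \<noteq> 0 \<Longrightarrow> (q::complex) powi (int l * (int l - int N)) = q^(l*l) * inverse q^(l*N)"
proof -
  assume q: "q \<noteq> 0"
  have e: "int l * (int l - int N) = int (l*l) - int (l*N)" by (simp add: algebra_simps)
  show ?thesis unfolding e by (rule pw_diff[OF q])
qed

lemma R_lemma:
  fixes q :: complex
  assumes "q \<noteq> 0"
  shows "j \<le> l \<Longrightarrow> qpoch (inverse q ^ l) q j * q^(j*l) * qpoch q q (l-j) = (\<Prod>i<j. -(q^i)) * qpoch q q l"
proof (induction j)
  case 0 then show ?case by simp
next
  case (Suc j)
  then have jl: "j < l" by simp
  have lj: "l - j = Suc (l - Suc j)" using jl by simp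
  have ql: "q^l = q^j * q^(l-j)" using jl by (metis le_add_diff_inverse less_imp_le power_add)
  have A: "qpoch q q (l-j) = qpoch q q (l - Suc j) * (1 - q^(l-j))"
    unfolding lj qpoch_Suc by simp
  have key: "(1 - inverse q^l * q^j) * q^l = -(q^j) * (1 - q^(l-j))"
  proof -
    have il: "inverse q^l = inverse (q^j*q^(l-j))" using ql by (simp add: power_inverse)
    have "q^j \<noteq> 0" "q^(l-j) \<noteq> 0" using assms by auto
    then show ?thesis unfolding il ql by (simp add: field_simps)
  qed
  have "qpoch (inverse q ^ l) q (Suc j) * q^(Suc j*l) * qpoch q q (l - Suc j)
      = qpoch (inverse q ^ l) q j * q^(j*l) * ((1 - inverse q^l * q^j) * q^l) * qpoch q q (l - Suc j)"
    by (simp add: qpoch_Suc power_add mult_ac)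
  also have "\<dots> = -(q^j) * (qpoch (inverse q ^ l) q j * q^(j*l) * qpoch q q (l-j))"
    unfolding key A by (simp add: mult_ac)
  also have "\<dots> = (\<Prod>i<Suc j. -(q^i)) * qpoch q q l" using Suc jl by (simp add: mult_ac)
  finally show ?case .
qed

lemma QP2:
  fixes q :: complex
  assumes "q \<noteq> 0" "A + D = B + C"
  shows "q^A * inverse q^B = q^C * inverse q^D"
proof -
  have "q^A * q^D = q^C * q^B" using assms(2) by (simp flip: power_add add: add.commute)
  then show ?thesis using assms(1) by (simp add: field_simps power_inverse)
qed

lemma term_alg:
  fixes X1 X2 Y1 Y2 QN QL QNL QNJ QM BD BD' BC AC CD CD' DC BCk PK PL HA QJ PN CA sg Qj :: complex
  assumes nz: "BD \<noteq> 0" "CD \<noteq> 0" "CD' \<noteq> 0" "DC \<noteq> 0" "BCk \<noteq> 0" "QJ \<noteq> 0" "CA \<noteq> 0"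
     "QL \<noteq> 0" "QNL \<noteq> 0" "QM \<noteq> 0" "QN \<noteq> 0" "QNJ \<noteq> 0" "sg \<noteq> 0" "Y1 \<noteq> 0" "Y2 \<noteq> 0"
    and PL: "PL * Y2 * QM = sg * QL" and PN: "PN * Y1 * QNJ = sg * QN" and POW: "X1 * Y1 = X2 * Y2"
  shows "X1 * (QN / (QL * QNL)) * (BD * BD' * BC * AC) / (CD * CD' * DC * BCk)
        * ((PK * PL * HA * CD) / (QJ * PN * CA * BD) * Qj)
      = Qj * AC * PK * HA / (BCk * QJ * CA) * (X2 * (QNJ / (QM * QNL)) * BD' * BC / (CD' * DC))"
proof -
  have PL': "PL = sg * QL / (Y2 * QM)" using PL nz by (simp add: field_simps)
  have PN': "PN = sg * QN / (Y1 * QNJ)" using PN nz by (simp add: field_simps)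
  have X1': "X1 = X2 * Y2 / Y1" using POW nz by (simp add: field_simps)
  show ?thesis unfolding PL' PN' X1' using nz by (simp add: divide_simps; simp add: algebra_simps)
qed

lemma termwise:
  fixes q a b c d :: complex and N k j m l :: nat
  assumes q: "q \<noteq> 0" and a: "a \<noteq> 0" and c: "c \<noteq> 0" and d: "d \<noteq> 0"
    and qN: "qpoch q q N \<noteq> 0"
    and jk: "j \<le> k" and kN: "k \<le> N" and l: "l = j + m" and lN: "l \<le> N"
    and h1: "qpoch (q powi (int l - int N) * c / d) q l \<noteq> 0"
    and h2: "qpoch (q powi (- int l) * d / c) q (N - l) \<noteq> 0"
    and h3: "qpoch (q powi (1 - int N) * b / c) q k \<noteq> 0"
    and h4: "qpoch (q powi (- int N)) q j \<noteq> 0"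
    and h5: "qpoch (c / a) q j \<noteq> 0"
    and h6: "qpoch (q powi (1 - int N) * b / d) q j \<noteq> 0"
  shows "(q powi (int l * (int l - int N)) * qbinom q N l *
         (qpoch (q powi (1 - int N) * b / d) q l
          * qpoch (q powi (1 - int N) * b / c) q (N - l)
          * qpoch (q powi (1 - int k) * a / c) q k)
         / (qpoch (q powi (int l - int N) * c / d) q l
            * qpoch (q powi (- int l) * d / c) q (N - l)
            * qpoch (q powi (1 - int N) * b / c) q k))
       * ((qpoch (q powi (- int k)) q j * qpoch (q powi (- int l)) q j
            * qpoch (q powi (int k - int N) * b / a) q j * qpoch (q powi (int l - int N) * c / d) q j)
          / (qpoch q q j * qpoch (q powi (- int N)) q j * qpoch (c / a) q j * qpoch (q powi (1 - int N) * b / d) q j)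
          * q ^ j)
     = Mc q a c (b*q^k*inverse q^N) k j * Ec q (b*q*inverse q^(N-j)) (c*q^j) d (N-j) m"
proof -
  note conv = pw_sq[OF q] pw_1[OF q] pw_neg pw_diff[OF q]
  define p where "p = inverse q"
  have pnz: "p \<noteq> 0" using q unfolding p_def by simp
  have qp1: "q * p = 1" using q unfolding p_def by simp
  have pNj: "p^(N-j) = p^N * q^j"
  proof -
    have "p^N = p^(N-j) * p^j" using jk kN by (simp flip: power_add)
    moreover have "p^j * q^j = 1" using qp1 by (simp flip: power_mult_distrib add: mult.commute)
    ultimately show ?thesis by (metis mult.assoc mult.right_neutral)
  qed
  have pl: "p^l = p^j * p^m" unfolding l by (simp add: power_add)
  have ql: "q^l = q^j * q^m" unfolding l by (simp add: power_add)
  have pjqj: "p^j * q^j = 1" using qp1 by (simp flip: power_mult_distrib add: mult.commute)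
  have pkqk: "p^k * q^k = 1" using qp1 by (simp flip: power_mult_distrib add: mult.commute)
  have al1: "b*q^k*p^N/a = q^k*p^N*b/a" by (simp add: mult_ac)
  have al2: "q*p^k*(b*q^k*p^N)/c = q*p^N*b/c"
  proof -
    have "q*p^k*(b*q^k*p^N)/c = (p^k*q^k)*(q*p^N*b/c)" by (simp add: mult_ac)
    then show ?thesis using pkqk by simp
  qed
  have al3: "b*q*p^(N-j)/d = q*p^N*b/d*q^j" unfolding pNj by (simp add: mult_ac)
  have al4: "b*q*p^(N-j)/(c*q^j) = q*p^N*b/c" unfolding pNj using q by (simp add: field_simps)
  have al5: "q^m*p^(N-j)*(c*q^j)/d = q^l*p^N*c/d*q^j" unfolding pNj ql by (simp add: mult_ac)
  have al6: "p^m*d/(c*q^j) = p^l*d/c"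
  proof -
    have "p^m*d/(c*q^j) = p^m*d*p^j/c" using q c pjqj by (simp add: field_simps)
    then show ?thesis unfolding pl by (simp add: mult_ac)
  qed
  have Nl: "N - j - m = N - l" using l by simp
  have s1: "qpoch (q*p^N*b/d) q l = qpoch (q*p^N*b/d) q j * qpoch (q*p^N*b/d*q^j) q m"
    unfolding l by (rule qpoch_add)
  have s2: "qpoch (q^l*p^N*c/d) q l = qpoch (q^l*p^N*c/d) q j * qpoch (q^l*p^N*c/d*q^j) q m"
    by (subst (1) l) (rule qpoch_add)
  have h1': "qpoch (q^l*p^N*c/d) q l \<noteq> 0" using h1 unfolding conv p_def .
  have CDnz: "qpoch (q^l*p^N*c/d) q j \<noteq> 0" and CD'nz: "qpoch (q^l*p^N*c/d*q^j) q m \<noteq> 0"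
    using h1' unfolding s2 by auto
  have DCnz: "qpoch (p^l*d/c) q (N-l) \<noteq> 0" using h2 unfolding conv p_def .
  have BCknz: "qpoch (q*p^N*b/c) q k \<noteq> 0" using h3 unfolding conv p_def .
  have PNnz: "qpoch (p^N) q j \<noteq> 0" using h4 unfolding conv p_def .
  have BDnz: "qpoch (q*p^N*b/d) q j \<noteq> 0" using h6 unfolding conv p_def .
  have QJnz: "qpoch q q j \<noteq> 0" using qpoch_nz_le[OF qN] jk kN by simp
  have QLnz: "qpoch q q l \<noteq> 0" using qpoch_nz_le[OF qN] lN by simp
  have QNLnz: "qpoch q q (N-l) \<noteq> 0" using qpoch_nz_le[OF qN] by simp
  have QMnz: "qpoch q q m \<noteq> 0" using qpoch_nz_le[OF qN] lN l by simp
  have QNJnz: "qpoch q q (N-j) \<noteq> 0" using qpoch_nz_le[OF qN] by simp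
  have sgnz: "(\<Prod>i<j. -(q^i)) \<noteq> 0" using q by simp
  have Y1nz: "q^(j*N) \<noteq> 0" and Y2nz: "q^(j*l) \<noteq> 0" using q by auto
  have RL: "qpoch (p^l) q j * q^(j*l) * qpoch q q m = (\<Prod>i<j. -(q^i)) * qpoch q q l"
    using R_lemma[OF q, of j l] l unfolding p_def by simp
  have RN: "qpoch (p^N) q j * q^(j*N) * qpoch q q (N-j) = (\<Prod>i<j. -(q^i)) * qpoch q q N"
    using R_lemma[OF q, of j N] jk kN unfolding p_def by simp
  have POW: "q^(l*l)*p^(l*N) * q^(j*N) = q^(m*m)*p^(m*(N-j)) * q^(j*l)"
  proof -
    obtain r where r: "N = l + r" using lN le_Suc_ex by blast
    have "q^(l*l+j*N) * inverse q^(l*N) = q^(m*m+j*l) * inverse q^(m*(N-j))"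
      by (rule QP2[OF q]) (simp add: r l algebra_simps)
    then show ?thesis unfolding p_def by (simp add: power_add mult_ac)
  qed
  have main: "q^(l*l)*p^(l*N) * (qpoch q q N / (qpoch q q l * qpoch q q (N-l)))
      * (qpoch (q*p^N*b/d) q j * qpoch (q*p^N*b/d*q^j) q m * qpoch (q*p^N*b/c) q (N-l) * qpoch (q*p^k*a/c) q k)
      / (qpoch (q^l*p^N*c/d) q j * qpoch (q^l*p^N*c/d*q^j) q m * qpoch (p^l*d/c) q (N-l) * qpoch (q*p^N*b/c) q k)
      * ((qpoch (p^k) q j * qpoch (p^l) q j * qpoch (q^k*p^N*b/a) q j * qpoch (q^l*p^N*c/d) q j)
         / (qpoch q q j * qpoch (p^N) q j * qpoch (c/a) q j * qpoch (q*p^N*b/d) q j) * q^j)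
    = q^j * qpoch (q*p^k*a/c) q k * qpoch (p^k) q j * qpoch (q^k*p^N*b/a) q j / (qpoch (q*p^N*b/c) q k * qpoch q q j * qpoch (c/a) q j)
      * (q^(m*m)*p^(m*(N-j)) * (qpoch q q (N-j) / (qpoch q q m * qpoch q q (N-l)))
         * qpoch (q*p^N*b/d*q^j) q m * qpoch (q*p^N*b/c) q (N-l) / (qpoch (q^l*p^N*c/d*q^j) q m * qpoch (p^l*d/c) q (N-l)))"
    by (rule term_alg[OF BDnz CDnz CD'nz DCnz BCknz QJnz h5 QLnz QNLnz QMnz qN QNJnz sgnz Y1nz Y2nz RL RN POW])
  show ?thesis
    unfolding conv qbinom_def Mc_def Ec_def p_def[symmetric]
    unfolding s1 s2 al1 al2 al3 al4 al5 al6 Nl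
    using main by (simp only: mult.assoc)
qed

lemma sum_shift_zero:
  fixes G :: "nat \<Rightarrow> complex"
  assumes z: "\<And>l. l < j \<Longrightarrow> G l = 0" and jN: "j \<le> N"
  shows "(\<Sum>l\<le>N. G l) = (\<Sum>m\<le>N-j. G (j+m))"
proof -
  have U: "{..N} = {..<j} \<union> {j..N}" using jN by auto
  have "(\<Sum>l\<le>N. G l) = (\<Sum>l<j. G l) + (\<Sum>l\<in>{j..N}. G l)"
    unfolding U by (rule sum.union_disjoint) auto
  also have "(\<Sum>l<j. G l) = 0" using z by simp
  also have "(\<Sum>l\<in>{j..N}. G l) = (\<Sum>m\<in>{0..N-j}. G (m+j))"
    using sum.shift_bounds_cl_nat_ivl[of G 0 j "N-j"] jN by simp
  also have "\<dots> = (\<Sum>m\<le>N-j. G (j+m))" by (simp add: atLeast0AtMost add.commute)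
  finally show ?thesis by simp
qed

lemma phi_term_zero:
  fixes q :: complex
  assumes "q \<noteq> 0" "l < j"
  shows "qpoch (q powi (- int l)) q j = 0"
  using assms by (intro qpoch_eq0[of l]) (auto simp: pw_neg power_inverse)

lemma KEY:
  fixes q c d :: complex and N s t :: nat
  assumes q: "q \<noteq> 0" and c: "c \<noteq> 0" and d: "d \<noteq> 0"
    and H1: "\<And>l. l \<le> N \<Longrightarrow> qpoch (q powi (int l - int N) * c / d) q l \<noteq> 0"
    and H2: "\<And>l. l \<le> N \<Longrightarrow> qpoch (q powi (- int l) * d / c) q (N - l) \<noteq> 0"
    and st: "s + t < N"
  shows "c*q^s \<noteq> d*q^t"
proof
  assume eq: "c*q^s = d*q^t"
  show False
  proof (cases "t \<le> s")
    case True
    define u where "u = s - t"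
    have su: "s = u + t" unfolding u_def using True by simp
    have "c*q^(u+t) = d*q^(0+t)" using eq unfolding su by simp
    then have cu: "c*q^u = d*q^0" by (rule cancel_pow[OF q])
    have uN: "u \<le> N" "0 < N - u" using st su by auto
    have "1 - inverse q^u * d / c * q^0 \<noteq> 0"
      using qpoch_nz_factor[OF H2[OF uN(1)] uN(2)] unfolding pw_neg .
    moreover have "inverse q^u * d / c * q^0 = 1"
    proof -
      have "d = c*q^u" using cu by simp
      then show ?thesis using q c by (simp add: field_simps power_inverse)
    qed
    ultimately show False by simp
  next
    case False
    define u where "u = t - s"
    have tu: "t = u + s" unfolding u_def using False by simp
    have "c*q^(0+s) = d*q^(u+s)" using eq unfolding tu by simp
    then have cu: "c*q^0 = d*q^u" by (rule cancel_pow[OF q])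
    have uN: "N - u \<le> N" "0 < N - u" using st tu by auto
    have "1 - q powi (int (N-u) - int N) * c / d * q^0 \<noteq> 0"
      using qpoch_nz_factor[OF H1[OF uN(1)] uN(2)] .
    moreover have "q powi (int (N-u) - int N) * c / d * q^0 = 1"
    proof -
      have e: "q^u * q^(N-u) = q^N" using uN by (simp flip: power_add)
      have "c = d*q^u" using cu by simp
      then show ?thesis unfolding pw_diff[OF q] using q d e by (simp add: field_simps power_inverse)
    qed
    ultimately show False by simp
  qed
qed

lemma HF:
  fixes q b c :: complex and N k i :: nat
  assumes q: "q \<noteq> 0" and c: "c \<noteq> 0"
    and H3: "qpoch (q powi (1 - int N) * b / c) q k \<noteq> 0"
    and ik: "i < k"
  shows "b*q^k*inverse q^N \<noteq> c*q^i"
proof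
  assume eq: "b*q^k*inverse q^N = c*q^i"
  have "1 - q powi (1 - int N) * b / c * q^(k - Suc i) \<noteq> 0"
    using qpoch_nz_factor[OF H3] ik by simp
  moreover have "q powi (1 - int N) * b / c * q^(k - Suc i) = 1"
  proof -
    have e1: "q * q^(k - Suc i) = q^(k-i)" using ik by (simp flip: power_Suc add: Suc_diff_Suc)
    have e2: "q^(k-i) * q^i = q^k" using ik by (simp flip: power_add)
    have "b*(q^(k-i)*q^i)*inverse q^N = c*q^i" using eq unfolding e2 .
    then have "(b*q^(k-i)*inverse q^N) * q^i = c*q^i" by (simp add: mult_ac)
    then have "b*q^(k-i)*inverse q^N = c" using q by simp
    then have X: "b*q^(k-i)*inverse q^N / c = 1" using c by simp
    have "q * inverse q^N * b / c * q^(k - Suc i) = b*(q * q^(k - Suc i))*inverse q^N / c"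
      by (simp add: divide_inverse mult_ac)
    then show ?thesis unfolding pw_1[OF q] e1 X by simp
  qed
  ultimately show False by simp
qed

theorem mainTheorem4:
  fixes a b c d q :: complex and N :: nat
  assumes "q \<noteq> 0" and "a \<noteq> 0" and "c \<noteq> 0" and "d \<noteq> 0"
    and "qpoch q q N \<noteq> 0"
    and "\<forall>l\<le>N. qpoch (q powi (int l - int N) * c / d) q l \<noteq> 0
                 \<and> qpoch (q powi (- int l) * d / c) q (N - l) \<noteq> 0
                 \<and> qpoch (q powi (1 - int N) * b / c) q l \<noteq> 0"
    and "\<forall>j\<le>N. qpoch (q powi (- int N)) q j \<noteq> 0
                 \<and> qpoch (c / a) q j \<noteq> 0
                 \<and> qpoch (q powi (1 - int N) * b / d) q j \<noteq> 0"
  shows "\<forall>k\<le>N. \<forall>x::complex.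
     qpoch (a * x) (inverse q) k * qpoch (b * x) (inverse q) (N - k) =
     (\<Sum>l\<le>N.
        (q powi (int l * (int l - int N)) * qbinom q N l *
         (qpoch (q powi (1 - int N) * b / d) q l
          * qpoch (q powi (1 - int N) * b / c) q (N - l)
          * qpoch (q powi (1 - int k) * a / c) q k)
         / (qpoch (q powi (int l - int N) * c / d) q l
            * qpoch (q powi (- int l) * d / c) q (N - l)
            * qpoch (q powi (1 - int N) * b / c) q k)
         * phi43 k (q powi (- int k)) (q powi (- int l))
                   (q powi (int k - int N) * b / a) (q powi (int l - int N) * c / d)
                   (q powi (- int N)) (c / a) (q powi (1 - int N) * b / d) q q)
        * qpoch (c * x) q l * qpoch (d * x) q (N - l))"
proof (intro allI impI)
  fix k x assume kN: "k \<le> N"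
  note q = assms(1) and a = assms(2) and c = assms(3) and d = assms(4) and qN = assms(5)
  have H1: "\<And>l. l \<le> N \<Longrightarrow> qpoch (q powi (int l - int N) * c / d) q l \<noteq> 0" using assms(6)[rule_format, THEN conjunct1] .
  have H2: "\<And>l. l \<le> N \<Longrightarrow> qpoch (q powi (- int l) * d / c) q (N - l) \<noteq> 0" using assms(6)[rule_format, THEN conjunct2, THEN conjunct1] .
  have H3: "\<And>l. l \<le> N \<Longrightarrow> qpoch (q powi (1 - int N) * b / c) q l \<noteq> 0" using assms(6)[rule_format, THEN conjunct2, THEN conjunct2] .
  have H4: "\<And>j. j \<le> N \<Longrightarrow> qpoch (q powi (- int N)) q j \<noteq> 0" using assms(7)[rule_format, THEN conjunct1] .
  have H5: "\<And>j. j \<le> N \<Longrightarrow> qpoch (c / a) q j \<noteq> 0" using assms(7)[rule_format, THEN conjunct2, THEN conjunct1] .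
  have H6: "\<And>j. j \<le> N \<Longrightarrow> qpoch (q powi (1 - int N) * b / d) q j \<noteq> 0" using assms(7)[rule_format, THEN conjunct2, THEN conjunct2] .
  have KEY': "c*q^s \<noteq> d*q^t" if st: "s + t < N" for s t
    by (rule KEY[OF q c d H1 H2 st])
  define h where "h = b*q^k*inverse q^N"
  have hf: "\<forall>i<k. h \<noteq> c*q^i" unfolding h_def using HF[OF q c H3[OF kN]] by blast
  have qk: "qpoch q q k \<noteq> 0" using qpoch_nz_le[OF qN kN] .
  have S1: "qpoch (a*x) (inverse q) k = (\<Sum>j\<le>k. Mc q a c h k j * qpoch (c*x) q j * qpoch (h*x) (inverse q) (k-j))"
    by (rule expM[OF q a c qk H5[OF kN] hf])
  have S2: "qpoch (h*x) (inverse q) (k-j) * qpoch (b*x) (inverse q) (N-k)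
      = (\<Sum>m\<le>N-j. Ec q (b*q*inverse q^(N-j)) (c*q^j) d (N-j) m * qpoch (c*q^j*x) q m * qpoch (d*x) q (N-j-m))"
    if jk: "j \<le> k" for j
  proof -
    have hb: "h*x = b*x*inverse q^(N-k)"
    proof -
      have "inverse q^N = inverse q^(N-k) * inverse q^k" using kN by (simp flip: power_add)
      moreover have "q^k * inverse q^k = 1" using q by (simp add: power_inverse)
      ultimately show ?thesis unfolding h_def by (simp add: mult_ac)
    qed
    have "qpoch (b*x) (inverse q) (N-j) = qpoch (b*x) (inverse q) ((N-k) + (k-j))" using jk kN by simp
    also have "\<dots> = qpoch (b*x) (inverse q) (N-k) * qpoch (h*x) (inverse q) (k-j)"
      unfolding qpoch_add hb ..
    finally have A: "qpoch (h*x) (inverse q) (k-j) * qpoch (b*x) (inverse q) (N-k) = qpoch (b*x) (inverse q) (N-j)"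
      by (simp add: mult.commute)
    have B: "qpoch (b*x) (inverse q) (N-j) = qpoch ((b*q*inverse q^(N-j))*x) q (N-j)"
      unfolding qpoch_inv_rev[OF q] by (simp add: mult_ac)
    have cj: "c*q^j \<noteq> 0" using c q by simp
    have qNj: "qpoch q q (N-j) \<noteq> 0" using qpoch_nz_le[OF qN] by simp
    have ND: "\<forall>s t. s + t < N-j \<longrightarrow> c*q^j*q^s \<noteq> d*q^t"
    proof (intro allI impI)
      fix s t assume "s + t < N - j"
      then have "(j+s) + t < N" by simp
      from KEY'[OF this] show "c*q^j*q^s \<noteq> d*q^t" by (simp add: power_add mult.assoc)
    qed
    show ?thesis unfolding A B by (rule expE[OF q cj d qNj ND])
  qed
  have S5: "qpoch (c*x) q j * qpoch (c*q^j*x) q m = qpoch (c*x) q (j+m)" for j m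
    unfolding qpoch_add by (simp add: mult_ac)
  have LHS: "qpoch (a*x) (inverse q) k * qpoch (b*x) (inverse q) (N-k)
     = (\<Sum>j\<le>k. \<Sum>m\<le>N-j. Mc q a c h k j * Ec q (b*q*inverse q^(N-j)) (c*q^j) d (N-j) m
           * qpoch (c*x) q (j+m) * qpoch (d*x) q (N-(j+m)))"
    unfolding S1 sum_distrib_right
  proof (rule sum.cong[OF refl])
    fix j assume "j \<in> {..k}"
    then have jk: "j \<le> k" by simp
    have "Mc q a c h k j * qpoch (c*x) q j * qpoch (h*x) (inverse q) (k-j) * qpoch (b*x) (inverse q) (N-k)
       = Mc q a c h k j * qpoch (c*x) q j * (qpoch (h*x) (inverse q) (k-j) * qpoch (b*x) (inverse q) (N-k))"
      by (simp add: mult.assoc)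
    also have "\<dots> = (\<Sum>m\<le>N-j. Mc q a c h k j * Ec q (b*q*inverse q^(N-j)) (c*q^j) d (N-j) m
           * (qpoch (c*x) q j * qpoch (c*q^j*x) q m) * qpoch (d*x) q (N-j-m))"
      unfolding S2[OF jk] sum_distrib_left by (rule sum.cong[OF refl]) (simp add: mult_ac)
    also have "\<dots> = (\<Sum>m\<le>N-j. Mc q a c h k j * Ec q (b*q*inverse q^(N-j)) (c*q^j) d (N-j) m
           * qpoch (c*x) q (j+m) * qpoch (d*x) q (N-(j+m)))"
      unfolding S5 by (simp add: diff_diff_add)
    finally show "Mc q a c h k j * qpoch (c*x) q j * qpoch (h*x) (inverse q) (k-j) * qpoch (b*x) (inverse q) (N-k)
       = (\<Sum>m\<le>N-j. Mc q a c h k j * Ec q (b*q*inverse q^(N-j)) (c*q^j) d (N-j) m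
           * qpoch (c*x) q (j+m) * qpoch (d*x) q (N-(j+m)))" .
  qed
  define PRE where "PRE l = q powi (int l * (int l - int N)) * qbinom q N l *
         (qpoch (q powi (1 - int N) * b / d) q l
          * qpoch (q powi (1 - int N) * b / c) q (N - l)
          * qpoch (q powi (1 - int k) * a / c) q k)
         / (qpoch (q powi (int l - int N) * c / d) q l
            * qpoch (q powi (- int l) * d / c) q (N - l)
            * qpoch (q powi (1 - int N) * b / c) q k)" for l
  define T where "T l j = (qpoch (q powi (- int k)) q j * qpoch (q powi (- int l)) q j
            * qpoch (q powi (int k - int N) * b / a) q j * qpoch (q powi (int l - int N) * c / d) q j)
          / (qpoch q q j * qpoch (q powi (- int N)) q j * qpoch (c / a) q j * qpoch (q powi (1 - int N) * b / d) q j)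
          * q ^ j" for l j
  define P where "P l = qpoch (c * x) q l * qpoch (d * x) q (N - l)" for l
  have RHS: "(\<Sum>l\<le>N. PRE l * phi43 k (q powi (- int k)) (q powi (- int l))
                   (q powi (int k - int N) * b / a) (q powi (int l - int N) * c / d)
                   (q powi (- int N)) (c / a) (q powi (1 - int N) * b / d) q q
        * qpoch (c * x) q l * qpoch (d * x) q (N - l))
     = (\<Sum>j\<le>k. \<Sum>l\<le>N. PRE l * T l j * P l)"
  proof -
    have "(\<Sum>l\<le>N. PRE l * phi43 k (q powi (- int k)) (q powi (- int l))
                   (q powi (int k - int N) * b / a) (q powi (int l - int N) * c / d)
                   (q powi (- int N)) (c / a) (q powi (1 - int N) * b / d) q q
        * qpoch (c * x) q l * qpoch (d * x) q (N - l))
        = (\<Sum>l\<le>N. \<Sum>j\<le>k. PRE l * T l j * P l)"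
      unfolding phi43_def T_def[symmetric] P_def
      by (rule sum.cong[OF refl]) (simp add: sum_distrib_left sum_distrib_right mult.assoc)
    also have "\<dots> = (\<Sum>j\<le>k. \<Sum>l\<le>N. PRE l * T l j * P l)" by (rule sum.swap)
    finally show ?thesis .
  qed
  have inner: "(\<Sum>l\<le>N. PRE l * T l j * P l) = (\<Sum>m\<le>N-j. Mc q a c h k j * Ec q (b*q*inverse q^(N-j)) (c*q^j) d (N-j) m
           * qpoch (c*x) q (j+m) * qpoch (d*x) q (N-(j+m)))" if jk: "j \<le> k" for j
  proof -
    have jN: "j \<le> N" using jk kN by simp
    have "(\<Sum>l\<le>N. PRE l * T l j * P l) = (\<Sum>m\<le>N-j. PRE (j+m) * T (j+m) j * P (j+m))"
    proof (rule sum_shift_zero[OF _ jN])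
      fix l assume "l < j"
      then have "T l j = 0" unfolding T_def using phi_term_zero[OF q] by simp
      then show "PRE l * T l j * P l = 0" by simp
    qed
    also have "\<dots> = (\<Sum>m\<le>N-j. Mc q a c h k j * Ec q (b*q*inverse q^(N-j)) (c*q^j) d (N-j) m
           * qpoch (c*x) q (j+m) * qpoch (d*x) q (N-(j+m)))"
    proof (rule sum.cong[OF refl])
      fix m assume "m \<in> {..N-j}"
      then have lN: "j + m \<le> N" using jN by simp
      have "PRE (j+m) * T (j+m) j = Mc q a c h k j * Ec q (b*q*inverse q^(N-j)) (c*q^j) d (N-j) m"
        unfolding PRE_def T_def h_def
        by (rule termwise[OF q a c d qN jk kN refl lN H1[OF lN] H2[OF lN] H3[OF kN] H4[OF jN] H5[OF jN] H6[OF jN]])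
      then show "PRE (j+m) * T (j+m) j * P (j+m) = Mc q a c h k j * Ec q (b*q*inverse q^(N-j)) (c*q^j) d (N-j) m
           * qpoch (c*x) q (j+m) * qpoch (d*x) q (N-(j+m))"
        unfolding P_def by (simp add: mult.assoc)
    qed
    finally show ?thesis .
  qed
  show "qpoch (a * x) (inverse q) k * qpoch (b * x) (inverse q) (N - k) =
     (\<Sum>l\<le>N.
        (q powi (int l * (int l - int N)) * qbinom q N l *
         (qpoch (q powi (1 - int N) * b / d) q l
          * qpoch (q powi (1 - int N) * b / c) q (N - l)
          * qpoch (q powi (1 - int k) * a / c) q k)
         / (qpoch (q powi (int l - int N) * c / d) q l
            * qpoch (q powi (- int l) * d / c) q (N - l)
            * qpoch (q powi (1 - int N) * b / c) q k)
         * phi43 k (q powi (- int k)) (q powi (- int l))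
                   (q powi (int k - int N) * b / a) (q powi (int l - int N) * c / d)
                   (q powi (- int N)) (c / a) (q powi (1 - int N) * b / d) q q)
        * qpoch (c * x) q l * qpoch (d * x) q (N - l))"
    unfolding PRE_def[symmetric] RHS LHS by (rule sum.cong[OF refl]) (simp add: inner)
qed

end
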